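(* Let $\mathcal{N}$ be a classical channel from $X$ to $Y$ and $\mathcal{M}$ a classical channel from $X'$ to $Y$, both given in standard form. Then $\mathcal{N}\sim\mathcal{M}$ if and only if $\mathcal{N}=\mathcal{M}$, i.e. their transition matrices are identical (in particular $|X|=|X'|$).
   Context: A classical channel $\mathcal{N}$ from $X$ ($|X|=m$) to $Y$ ($|Y|=n$) has an $n\times m$ column-stochastic transition matrix $N=[\mathbf{p}_1\cdots\mathbf{p}_m]$. For $\mathbf{p}\in\mathrm{Prob}(n)$, $\|\mathbf{p}\|_{(k)}$ denotes the sum of its $k$ largest entries, and $\mathbf{p}\succ\mathbf{q}$ (vector majorization) means $\|\mathbf{p}\|_{(k)}\ge\|\mathbf{q}\|_{(k)}$ for all $k$. $\mathcal{N}$ is in standard form if: (1) the entries of each column are in non-increasing order; (2) the columns are in decreasing lexicographic order: for every $x\in[m-1]$ there is $\ell\in[n]$ with $\|\mathbf{p}_x\|_{(k)}=\|\mathbf{p}_{x+1}\|_{(k)}$ for all $k<\ell$ and $\|\mathbf{p}_x\|_{(\ell)}>\|\mathbf{p}_{x+1}\|_{(\ell)}$; (3) no column is majorized by a convex combination of the other columns. Classical channel majorization: $\mathcal{N}\succ\mathcal{M}$ if $\mathcal{M}=\Theta[\mathcal{N}]$ for a random permutation superchannel, i.e. $\Theta[\mathcal{N}]=\mathcal{D}^{YZ\to Y}\circ(\mathcal{N}\otimes\mathrm{id}^Z)\circ\mathcal{S}^{X'\to XZ}$ with $Z$ a finite classical system, $\mathcal{S},\mathcal{D}$ classical channels and $\mathcal{D}(\cdot\otimes\mathbf{e}_z)$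 doubly stochastic for every $z$. $\mathcal{N}\sim\mathcal{M}$ means $\mathcal{N}\succ\mathcal{M}$ and $\mathcal{M}\succ\mathcal{N}$. *)

theory Defs
  imports Complex_Main
begin

text \<open>A classical channel from X (|X| = m) to Y (|Y| = n) is represented by its
  transition matrix N :: nat => nat => real, entry N y x (y < n, x < m) being the
  probability of output y given input x. Values outside the index range are irrelevant.\<close>

definition stochastic :: "nat \<Rightarrow> nat \<Rightarrow> (nat \<Rightarrow> nat \<Rightarrow> real) \<Rightarrow> bool" where
  "stochastic n m N \<longleftrightarrow>
     (\<forall>y<n. \<forall>x<m. 0 \<le> N y x) \<and> (\<forall>x<m. (\<Sum>y<n. N y x) = 1)"

definition col :: "(nat \<Rightarrow> nat \<Rightarrow> real) \<Rightarrow> nat \<Rightarrow> (nat \<Rightarrow> real)" where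
  "col N x = (\<lambda>y. N y x)"

definition kyfan :: "nat \<Rightarrow> (nat \<Rightarrow> real) \<Rightarrow> nat \<Rightarrow> real" where
  "kyfan n p k = Max ((\<lambda>S. \<Sum>i\<in>S. p i) ` {S. S \<subseteq> {..<n} \<and> card S = k})"

definition majorizes :: "nat \<Rightarrow> (nat \<Rightarrow> real) \<Rightarrow> (nat \<Rightarrow> real) \<Rightarrow> bool" where
  "majorizes n p q \<longleftrightarrow> (\<forall>k\<in>{1..n}. kyfan n q k \<le> kyfan n p k)"

definition standard_form :: "nat \<Rightarrow> nat \<Rightarrow> (nat \<Rightarrow> nat \<Rightarrow> real) \<Rightarrow> bool" where
  "standard_form n m N \<longleftrightarrow>
     stochastic n m N \<and>
     \<comment> \<open>(1) entries of each column non-increasing\<close>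
     (\<forall>x<m. \<forall>i j. i \<le> j \<and> j < n \<longrightarrow> N j x \<le> N i x) \<and>
     \<comment> \<open>(2) columns in decreasing lexicographic order of Ky Fan norms\<close>
     (\<forall>x. x + 1 < m \<longrightarrow>
        (\<exists>l\<in>{1..n}. (\<forall>k\<in>{1..<l}. kyfan n (col N x) k = kyfan n (col N (x+1)) k) \<and>
                     kyfan n (col N x) l > kyfan n (col N (x+1)) l)) \<and>
     \<comment> \<open>(3) no column majorized by a convex combination of the other columns\<close>
     (\<forall>x<m. \<not> (\<exists>t::nat \<Rightarrow> real.
        (\<forall>x'<m. 0 \<le> t x') \<and> t x = 0 \<and> (\<Sum>x'<m. t x') = 1 \<and>
        majorizes n (\<lambda>y. \<Sum>x'<m. t x' * N y x') (col N x)))"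

text \<open>Channel majorization N \<succ> M (N : X \<rightarrow> Y with |X| = m, M : X' \<rightarrow> Y with |X'| = m', |Y| = n):
  M = D \<circ> (N \<otimes> id_Z) \<circ> S for a finite classical system Z (|Z| = l), a classical channel
  S : X' \<rightarrow> XZ (entries S x z x') and a classical channel D : YZ \<rightarrow> Y (entries D y' y z)
  with D(\<cdot> \<otimes> e_z) doubly stochastic for every z.\<close>
definition channel_majorizes ::
  "nat \<Rightarrow> nat \<Rightarrow> (nat \<Rightarrow> nat \<Rightarrow> real) \<Rightarrow> nat \<Rightarrow> (nat \<Rightarrow> nat \<Rightarrow> real) \<Rightarrow> bool" where
  "channel_majorizes n m N m' M \<longleftrightarrow>
     (\<exists>(l::nat) (S::nat \<Rightarrow> nat \<Rightarrow> nat \<Rightarrow> real) (D::nat \<Rightarrow> nat \<Rightarrow> nat \<Rightarrow> real).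
        (\<forall>x<m. \<forall>z<l. \<forall>x'<m'. 0 \<le> S x z x') \<and>
        (\<forall>x'<m'. (\<Sum>x<m. \<Sum>z<l. S x z x') = 1) \<and>
        (\<forall>z<l. \<forall>y'<n. \<forall>y<n. 0 \<le> D y' y z) \<and>
        (\<forall>z<l. \<forall>y<n. (\<Sum>y'<n. D y' y z) = 1) \<and>
        (\<forall>z<l. \<forall>y'<n. (\<Sum>y<n. D y' y z) = 1) \<and>
        (\<forall>y<n. \<forall>x'<m'. M y x' = (\<Sum>z<l. \<Sum>x<m. \<Sum>y0<n. D y y0 z * N y0 x * S x z x')))"

definition channel_equiv ::
  "nat \<Rightarrow> nat \<Rightarrow> (nat \<Rightarrow> nat \<Rightarrow> real) \<Rightarrow> nat \<Rightarrow> (nat \<Rightarrow> nat \<Rightarrow> real) \<Rightarrow> bool" where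
  "channel_equiv n m N m' M \<longleftrightarrow> channel_majorizes n m N m' M \<and> channel_majorizes n m' M m N"

end

theory Submission
  imports Defs
begin

lemma sum_ind: assumes "finite A" shows " (\<Sum>y\<in>A. (if P y then 1 else 0) * (f y::real)) = sum f {y\<in>A. P y}"
proof -
  have "(\<Sum>y\<in>A. (if P y then 1 else 0) * (f y::real)) = (\<Sum>y\<in>A. if P y then f y else 0)"
    by (rule sum.cong) auto
  then show ?thesis using sum.inter_filter assms by metis
qed

lemma weight_le:
  fixes p w :: "nat \<Rightarrow> real"
  assumes mono: "\<forall>i j. i \<le> j \<and> j < n \<longrightarrow> p j \<le> p i" and kn: "k \<le> n"
   and w01: "\<forall>y<n. 0 \<le> w y \<and> w y \<le> 1" and ws: "(\<Sum>y<n. w y) = real k"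
  shows "(\<Sum>y<n. w y * p y) \<le> (\<Sum>y<k. p y)"
proof (cases "k = 0")
  case True
  then have "\<forall>y\<in>{..<n}. w y = 0" using ws w01 sum_nonneg_eq_0_iff[of "{..<n}" w] by auto
  then show ?thesis using True by simp
next
  case False
  have k0: "k > 0" using False by simp
  define v where "v = p (k-1)"
  define ind where "ind = (\<lambda>y::nat. if y < k then (1::real) else 0)"
  have s1: "{..<n} \<inter> {y. y < k} = {..<k}" using kn by auto
  have e1: "(\<Sum>y<k. p y) = (\<Sum>y<n. ind y * p y)"
    unfolding ind_def using kn by (subst sum_ind) (auto intro: arg_cong[where f="sum p"])
  have e2: "(\<Sum>y<n. ind y) = real k"
    unfolding ind_def by (simp add: sum.If_cases s1)
  have trm: "(w y - ind y) * p y \<le> (w y - ind y) * v" if "y < n" for y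
  proof (cases "y < k")
    case True
    have "y \<le> k-1" "k-1 < n" using True kn k0 by arith+
    then have "v \<le> p y" using mono v_def by blast
    moreover have "w y - ind y \<le> 0" using True w01 that ind_def by auto
    ultimately show ?thesis by (simp add: mult_left_mono_neg)
  next
    case f: False
    then have "p y \<le> v" using mono v_def that False by auto
    moreover have "0 \<le> w y - ind y" using f w01 that ind_def by auto
    ultimately show ?thesis by (simp add: mult_left_mono)
  qed
  have "(\<Sum>y<n. w y * p y) - (\<Sum>y<k. p y) = (\<Sum>y<n. (w y - ind y) * p y)"
    by (simp add: e1 sum_subtractf left_diff_distrib)
  also have "\<dots> \<le> (\<Sum>y<n. (w y - ind y) * v)" by (rule sum_mono) (use trm in auto)
  also have "\<dots> = ((\<Sum>y<n. w y) - (\<Sum>y<n. ind y)) * v" by (simp add: sum_subtractf[symmetric] sum_distrib_right)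
  also have "\<dots> = 0" using ws e2 by simp
  finally show ?thesis by simp
qed

lemma kyfan_sorted:
  fixes p :: "nat \<Rightarrow> real"
  assumes mono: "\<forall>i j. i \<le> j \<and> j < n \<longrightarrow> p j \<le> p i" and kn: "k \<le> n"
  shows "kyfan n p k = (\<Sum>y<k. p y)"
  unfolding kyfan_def
proof (rule Max_eqI)
  show "finite ((\<lambda>S. \<Sum>i\<in>S. p i) ` {S. S \<subseteq> {..<n} \<and> card S = k})"
    by (rule finite_imageI) (rule finite_subset[of _ "Pow {..<n}"], auto)
  show "sum p {..<k} \<in> (\<lambda>S. \<Sum>i\<in>S. p i) ` {S. S \<subseteq> {..<n} \<and> card S = k}"
    using kn by (intro rev_image_eqI[of "{..<k}"]) auto
  fix y assume "y \<in> (\<lambda>S. \<Sum>i\<in>S. p i) ` {S. S \<subseteq> {..<n} \<and> card S = k}"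
  then obtain S where S: "S \<subseteq> {..<n}" "card S = k" "y = sum p S" by auto
  have i: "{..<n} \<inter> {i. i \<in> S} = S" using S by auto
  have "sum p S = (\<Sum>i<n. (if i\<in>S then 1 else 0) * p i)"
    using S by (subst sum_ind) (auto intro: arg_cong[where f="sum p"])
  also have "\<dots> \<le> (\<Sum>y<k. p y)"
    by (rule weight_le[OF mono kn]) (use S in \<open>auto simp: sum.If_cases Int_absorb1\<close>)
  finally show "y \<le> sum p {..<k}" using S by simp
qed


definition cum :: "(nat \<Rightarrow> nat \<Rightarrow> real) \<Rightarrow> nat \<Rightarrow> nat \<Rightarrow> real" where
  "cum N x k = (\<Sum>y<k. N y x)"

definition lexgt :: "nat \<Rightarrow> (nat \<Rightarrow> real) \<Rightarrow> (nat \<Rightarrow> real) \<Rightarrow> bool" where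
  "lexgt n a b \<longleftrightarrow> (\<exists>l\<in>{1..n}. (\<forall>k\<in>{1..<l}. a k = b k) \<and> b l < a l)"

lemma sf_kyfan:
  assumes "standard_form n m N" "x < m" "k \<le> n"
  shows "kyfan n (col N x) k = cum N x k"
  using assms unfolding standard_form_def cum_def
  by (subst kyfan_sorted) (auto simp: col_def)

lemma sf_lex:
  assumes "standard_form n m N" "x + 1 < m"
  shows "lexgt n (cum N x) (cum N (x+1))"
proof -
  from assms obtain l where l: "l\<in>{1..n}" "\<forall>k\<in>{1..<l}. kyfan n (col N x) k = kyfan n (col N (x+1)) k"
      "kyfan n (col N x) l > kyfan n (col N (x+1)) l"
    unfolding standard_form_def by blast
  show ?thesis unfolding lexgt_def
    using l sf_kyfan[OF assms(1)] assms(2) by (intro bexI[of _ l]) auto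
qed

lemma sf_nodom:
  assumes sf: "standard_form n m N" and x: "x < m"
  shows "\<not> (\<exists>t. (\<forall>x'<m. 0 \<le> t x') \<and> t x = 0 \<and> sum t {..<m} = 1 \<and>
     (\<forall>k\<in>{1..n}. cum N x k \<le> (\<Sum>x'<m. t x' * cum N x' k)))"
proof
  assume "\<exists>t. (\<forall>x'<m. 0 \<le> t x') \<and> t x = 0 \<and> sum t {..<m} = 1 \<and>
     (\<forall>k\<in>{1..n}. cum N x k \<le> (\<Sum>x'<m. t x' * cum N x' k))"
  then obtain t where t: "\<forall>x'<m. 0 \<le> t x'" "t x = 0" "sum t {..<m} = 1"
     "\<forall>k\<in>{1..n}. cum N x k \<le> (\<Sum>x'<m. t x' * cum N x' k)" by blast
  have mono: "\<forall>i j. i \<le> j \<and> j < n \<longrightarrow> (\<Sum>x'<m. t x' * N j x') \<le> (\<Sum>x'<m. t x' * N i x')"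
    using sf t(1) unfolding standard_form_def by (auto intro!: sum_mono mult_left_mono)
  have "majorizes n (\<lambda>y. \<Sum>x'<m. t x' * N y x') (col N x)"
    unfolding majorizes_def
  proof
    fix k assume k: "k \<in> {1..n}"
    have "kyfan n (col N x) k = cum N x k" using sf_kyfan[OF sf x] k by auto
    also have "\<dots> \<le> (\<Sum>x'<m. t x' * cum N x' k)" using t(4) k by auto
    also have "\<dots> = (\<Sum>y<k. \<Sum>x'<m. t x' * N y x')"
      unfolding cum_def by (simp add: sum_distrib_left sum.swap[of _ "{..<k}"])
    also have "\<dots> = kyfan n (\<lambda>y. \<Sum>x'<m. t x' * N y x') k"
      using kyfan_sorted[OF mono] k by auto
    finally show "kyfan n (col N x) k \<le> kyfan n (\<lambda>y. \<Sum>x'<m. t x' * N y x') k" .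
  qed
  then show False using sf x t(1-3) unfolding standard_form_def by blast
qed

lemma cm_dom:
  assumes sf: "standard_form n m N" and cm: "channel_majorizes n m N m' M" and x': "x' < m'"
  shows "\<exists>t. (\<forall>x<m. 0 \<le> t x) \<and> sum t {..<m} = 1 \<and>
     (\<forall>k\<in>{1..n}. cum M x' k \<le> (\<Sum>x<m. t x * cum N x k))"
proof -
  obtain l :: nat and S D :: "nat \<Rightarrow> nat \<Rightarrow> nat \<Rightarrow> real" where S0: "\<forall>x<m. \<forall>z<l. \<forall>x'<m'. 0 \<le> S x z x'"
    and S1: "\<forall>x'<m'. (\<Sum>x<m. \<Sum>z<l. S x z x') = 1"
    and D0: "\<forall>z<l. \<forall>y'<n. \<forall>y<n. 0 \<le> D y' y z"
    and D1: "\<forall>z<l. \<forall>y<n. (\<Sum>y'<n. D y' y z) = 1"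
    and D2: "\<forall>z<l. \<forall>y'<n. (\<Sum>y<n. D y' y z) = 1"
    and MM: "\<forall>y<n. \<forall>x'<m'. M y x' = (\<Sum>z<l. \<Sum>x<m. \<Sum>y0<n. D y y0 z * N y0 x * S x z x')"
    using cm unfolding channel_majorizes_def by (elim exE conjE) (rule that, assumption+)
  define t where "t x = (\<Sum>z<l. S x z x')" for x
  have Nmono: "\<forall>i j. i \<le> j \<and> j < n \<longrightarrow> N j x \<le> N i x" if "x < m" for x
    using sf that unfolding standard_form_def by blast
  have dom: "cum M x' k \<le> (\<Sum>x<m. t x * cum N x k)" if k: "k \<in> {1..n}" for k
  proof -
    have "cum M x' k = (\<Sum>y<k. \<Sum>z<l. \<Sum>x<m. \<Sum>y0<n. D y y0 z * N y0 x * S x z x')"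
      unfolding cum_def using MM x' k by (intro sum.cong) auto
    also have "\<dots> = (\<Sum>z<l. \<Sum>x<m. S x z x' * (\<Sum>y0<n. (\<Sum>y<k. D y y0 z) * N y0 x))"
    proof -
      have "(\<Sum>y<k. \<Sum>z<l. \<Sum>x<m. \<Sum>y0<n. D y y0 z * N y0 x * S x z x')
          = (\<Sum>z<l. \<Sum>y<k. \<Sum>x<m. \<Sum>y0<n. D y y0 z * N y0 x * S x z x')"
        by (rule sum.swap)
      also have "\<dots> = (\<Sum>z<l. \<Sum>x<m. \<Sum>y<k. \<Sum>y0<n. D y y0 z * N y0 x * S x z x')"
        by (rule sum.cong[OF refl], rule sum.swap)
      also have "\<dots> = (\<Sum>z<l. \<Sum>x<m. \<Sum>y0<n. \<Sum>y<k. D y y0 z * N y0 x * S x z x')"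
        by (intro sum.cong[OF refl], rule sum.swap)
      also have "\<dots> = (\<Sum>z<l. \<Sum>x<m. S x z x' * (\<Sum>y0<n. (\<Sum>y<k. D y y0 z) * N y0 x))"
        by (intro sum.cong[OF refl]) (simp add: sum_distrib_left sum_distrib_right mult_ac)
      finally show ?thesis .
    qed
    also have "\<dots> \<le> (\<Sum>z<l. \<Sum>x<m. S x z x' * cum N x k)"
    proof (intro sum_mono mult_left_mono)
      fix z x assume z: "z \<in> {..<l}" and x: "x \<in> {..<m}"
      show "0 \<le> S x z x'" using S0 z x x' by auto
      show "(\<Sum>y0<n. (\<Sum>y<k. D y y0 z) * N y0 x) \<le> cum N x k"
        unfolding cum_def
      proof (rule weight_le)
        show "\<forall>i j. i \<le> j \<and> j < n \<longrightarrow> N j x \<le> N i x" using Nmono x by auto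
        show "k \<le> n" using k by auto
        show "\<forall>y<n. 0 \<le> (\<Sum>ya<k. D ya y z) \<and> (\<Sum>ya<k. D ya y z) \<le> 1"
        proof (intro allI impI conjI)
          fix y assume y: "y < n"
          show "0 \<le> (\<Sum>ya<k. D ya y z)" using D0 z y k by (intro sum_nonneg) auto
          have "(\<Sum>ya<k. D ya y z) \<le> (\<Sum>ya<n. D ya y z)"
            using D0 z y k by (intro sum_mono2) auto
          then show "(\<Sum>ya<k. D ya y z) \<le> 1" using D1 z y by auto
        qed
        have "(\<Sum>y<n. \<Sum>ya<k. D ya y z) = (\<Sum>ya<k. \<Sum>y<n. D ya y z)" by (rule sum.swap)
        also have "\<dots> = (\<Sum>ya<k. 1)" using D2 z k by (intro sum.cong) auto
        finally show "(\<Sum>y<n. \<Sum>ya<k. D ya y z) = real k" by simp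
      qed
    qed
    also have "\<dots> = (\<Sum>x<m. t x * cum N x k)"
      unfolding t_def by (simp add: sum_distrib_left mult_ac) (rule sum.swap)
    finally show ?thesis .
  qed
  show ?thesis
    using S0 S1 x' dom unfolding t_def by (intro exI[of _ t]) (auto simp: t_def intro!: sum_nonneg)
qed


lemma found:
  fixes c d :: "nat \<Rightarrow> nat \<Rightarrow> real"
  assumes H1: "\<forall>y<m'. \<exists>t. (\<forall>x<m. 0 \<le> t x) \<and> sum t {..<m} = 1 \<and> (\<forall>k\<in>K. d y k \<le> (\<Sum>x<m. t x * c x k))"
  and H2: "\<forall>x<m. \<exists>s. (\<forall>y<m'. 0 \<le> s y) \<and> sum s {..<m'} = 1 \<and> (\<forall>k\<in>K. c x k \<le> (\<Sum>y<m'. s y * d y k))"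
  and Hc: "\<forall>x<m. \<not>(\<exists>t. (\<forall>x'<m. 0 \<le> t x') \<and> t x = 0 \<and> sum t {..<m} = 1 \<and> (\<forall>k\<in>K. c x k \<le> (\<Sum>x'<m. t x' * c x' k)))"
  and x: "x < m"
  shows "\<exists>y<m'. \<forall>k\<in>K. c x k = d y k"
proof -
  from H1 have "\<forall>y. \<exists>t. y < m' \<longrightarrow> (\<forall>x<m. 0 \<le> t x) \<and> sum t {..<m} = 1 \<and> (\<forall>k\<in>K. d y k \<le> (\<Sum>x<m. t x * c x k))"
    by blast
  then obtain T where T: "\<And>y. y < m' \<Longrightarrow> (\<forall>x<m. 0 \<le> T y x) \<and> sum (T y) {..<m} = 1 \<and> (\<forall>k\<in>K. d y k \<le> (\<Sum>x'<m. T y x' * c x' k))"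
    by metis
  from H2 x obtain s where s0: "\<forall>y<m'. 0 \<le> s y" and s1: "sum s {..<m'} = 1"
     and s2: "\<forall>k\<in>K. c x k \<le> (\<Sum>y<m'. s y * d y k)" by blast
  define r where "r x' = (\<Sum>y<m'. s y * T y x')" for x'
  have rnn: "\<forall>x'<m. 0 \<le> r x'" unfolding r_def using s0 T by (auto intro!: sum_nonneg)
  have rsum: "sum r {..<m} = 1"
  proof -
    have "sum r {..<m} = (\<Sum>y<m'. s y * sum (T y) {..<m})"
      unfolding r_def by (simp add: sum_distrib_left) (rule sum.swap)
    also have "\<dots> = (\<Sum>y<m'. s y)" using T by (intro sum.cong) auto
    finally show ?thesis using s1 by simp
  qed
  have chain: "c x k \<le> (\<Sum>x'<m. r x' * c x' k)" if k: "k \<in> K" for k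
  proof -
    have "c x k \<le> (\<Sum>y<m'. s y * d y k)" using s2 k by auto
    also have "\<dots> \<le> (\<Sum>y<m'. s y * (\<Sum>x'<m. T y x' * c x' k))"
      using s0 T k by (intro sum_mono mult_left_mono) auto
    also have "\<dots> = (\<Sum>x'<m. r x' * c x' k)"
      unfolding r_def by (simp add: sum_distrib_left sum_distrib_right mult_ac) (rule sum.swap)
    finally show ?thesis .
  qed
  have xin: "x \<in> {..<m}" using x by simp
  have rle: "r x \<le> 1" using member_le_sum[OF xin, of r] rnn rsum by auto
  have rx1: "r x = 1"
  proof (rule ccontr)
    assume "r x \<noteq> 1"
    then have rl: "r x < 1" using rle by simp
    define t' where "t' x' = (if x' = x then 0 else r x' / (1 - r x))" for x'
    have A: "sum r {..<m} = r x + sum r ({..<m} - {x})" using sum.remove[OF _ xin] by simp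
    have t'sum: "sum t' {..<m} = 1"
    proof -
      have "sum t' {..<m} = t' x + sum t' ({..<m} - {x})" using sum.remove[OF _ xin] by simp
      also have "\<dots> = sum (\<lambda>x'. r x' / (1 - r x)) ({..<m} - {x})"
        unfolding t'_def by (auto intro!: sum.cong)
      also have "\<dots> = sum r ({..<m} - {x}) / (1 - r x)" by (simp add: sum_divide_distrib)
      also have "\<dots> = 1" using A rsum rl by simp
      finally show ?thesis .
    qed
    have "\<forall>k\<in>K. c x k \<le> (\<Sum>x'<m. t' x' * c x' k)"
    proof
      fix k assume k: "k \<in> K"
      have B: "(\<Sum>x'<m. r x' * c x' k) = r x * c x k + (\<Sum>x'\<in>{..<m}-{x}. r x' * c x' k)"
        using sum.remove[OF _ xin] by simp
      have C: "(\<Sum>x'<m. t' x' * c x' k) = (\<Sum>x'\<in>{..<m}-{x}. r x' * c x' k) / (1 - r x)"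
      proof -
        have "(\<Sum>x'<m. t' x' * c x' k) = t' x * c x k + (\<Sum>x'\<in>{..<m}-{x}. t' x' * c x' k)"
          using sum.remove[OF _ xin] by simp
        also have "\<dots> = (\<Sum>x'\<in>{..<m}-{x}. r x' * c x' k / (1 - r x))"
          unfolding t'_def by (auto intro!: sum.cong)
        finally show ?thesis by (simp add: sum_divide_distrib)
      qed
      have "(1 - r x) * c x k \<le> (\<Sum>x'\<in>{..<m}-{x}. r x' * c x' k)"
        using chain[OF k] B by (simp add: algebra_simps)
      then show "c x k \<le> (\<Sum>x'<m. t' x' * c x' k)" unfolding C using rl
        by (simp add: le_divide_eq mult.commute)
    qed
    moreover have "\<forall>x'<m. 0 \<le> t' x'" unfolding t'_def using rnn rl by auto
    moreover have "t' x = 0" unfolding t'_def by simp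
    ultimately show False using Hc x t'sum by blast
  qed
  have Tle: "T y x \<le> 1" if "y < m'" for y
    using member_le_sum[OF xin, of "T y"] T[OF that] by auto
  have sT: "T y x = 1" if y: "y < m'" "0 < s y" for y
  proof -
    have "(\<Sum>y<m'. s y * (1 - T y x)) = sum s {..<m'} - r x"
      unfolding r_def by (simp add: algebra_simps sum_subtractf)
    also have "\<dots> = 0" using s1 rx1 by simp
    finally have "\<forall>y\<in>{..<m'}. s y * (1 - T y x) = 0"
      using sum_nonneg_eq_0_iff[of "{..<m'}" "\<lambda>y. s y * (1 - T y x)"] s0 Tle by auto
    then have "s y * (1 - T y x) = 0" using y(1) by blast
    then show ?thesis using y by simp
  qed
  have dle: "d y k \<le> c x k" if y: "y < m'" "0 < s y" and k: "k \<in> K" for y k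
  proof -
    have Ty: "\<forall>x'<m. 0 \<le> T y x'" "sum (T y) {..<m} = 1" using T y by auto
    have "sum (T y) ({..<m} - {x}) = 0" using sum.remove[OF _ xin, of "T y"] Ty sT[OF y] by simp
    then have z: "\<forall>x'\<in>{..<m} - {x}. T y x' = 0"
      using sum_nonneg_eq_0_iff[of "{..<m} - {x}" "T y"] Ty by auto
    have "(\<Sum>x'<m. T y x' * c x' k) = T y x * c x k + (\<Sum>x'\<in>{..<m}-{x}. T y x' * c x' k)"
      using sum.remove[OF _ xin] by simp
    also have "\<dots> = c x k" using z sT[OF y] by simp
    finally show ?thesis using T y k by metis
  qed
  obtain y0 where y0: "y0 < m'" "0 < s y0"
  proof (rule ccontr)
    assume "\<not> thesis"
    then have "\<forall>y\<in>{..<m'}. s y = 0" using that s0 by force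
    then show False using s1 by simp
  qed
  show ?thesis
  proof (intro exI[of _ y0] conjI ballI)
    show "y0 < m'" by fact
    fix k assume k: "k \<in> K"
    have "(\<Sum>y<m'. s y * (c x k - d y k)) = c x k - (\<Sum>y<m'. s y * d y k)"
      using s1 by (simp add: algebra_simps sum_subtractf sum_distrib_right[symmetric])
    also have "\<dots> \<le> 0" using s2 k by auto
    finally have "(\<Sum>y<m'. s y * (c x k - d y k)) \<le> 0" .
    moreover have nn: "\<forall>y\<in>{..<m'}. 0 \<le> s y * (c x k - d y k)"
    proof
      fix y assume "y \<in> {..<m'}"
      then show "0 \<le> s y * (c x k - d y k)" using s0 dle[of y k] k
        by (cases "s y = 0") (auto simp: order_le_less)
    qed
    ultimately have "(\<Sum>y<m'. s y * (c x k - d y k)) = 0" by (meson antisym sum_nonneg)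
    then have "\<forall>y\<in>{..<m'}. s y * (c x k - d y k) = 0"
      using sum_nonneg_eq_0_iff[of "{..<m'}" "\<lambda>y. s y * (c x k - d y k)"] nn by simp
    then have "s y0 * (c x k - d y0 k) = 0" using y0(1) by simp
    then show "c x k = d y0 k" using y0(2) by simp
  qed
qed


lemma lexgt_trans:
  assumes "lexgt n a b" "lexgt n b c" shows "lexgt n a c"
proof -
  obtain l1 where l1: "l1 \<in> {1..n}" "\<forall>k\<in>{1..<l1}. a k = b k" "b l1 < a l1"
    using assms(1) unfolding lexgt_def by blast
  obtain l2 where l2: "l2 \<in> {1..n}" "\<forall>k\<in>{1..<l2}. b k = c k" "c l2 < b l2"
    using assms(2) unfolding lexgt_def by blast
  show ?thesis unfolding lexgt_def
  proof (cases "l1 < l2")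
    case True
    then show "\<exists>l\<in>{1..n}. (\<forall>k\<in>{1..<l}. a k = c k) \<and> c l < a l"
      using l1 l2 by (intro bexI[of _ l1]) auto
  next
    case False
    show "\<exists>l\<in>{1..n}. (\<forall>k\<in>{1..<l}. a k = c k) \<and> c l < a l"
    proof (cases "l1 = l2")
      case True then show ?thesis using l1 l2 by (intro bexI[of _ l1]) auto
    next
      case False
      then have "l2 < l1" using \<open>\<not> l1 < l2\<close> by simp
      then show ?thesis using l1 l2 by (intro bexI[of _ l2]) auto
    qed
  qed
qed

lemma lexgt_irrefl: "\<not> lexgt n a a"
  unfolding lexgt_def by auto

lemma lexgt_cong:
  assumes "\<forall>k\<in>{1..n}. a k = a' k" "\<forall>k\<in>{1..n}. b k = b' k" "lexgt n a b"
  shows "lexgt n a' b'"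
proof -
  obtain l where l: "l \<in> {1..n}" "\<forall>k\<in>{1..<l}. a k = b k" "b l < a l"
    using assms(3) unfolding lexgt_def by blast
  show ?thesis unfolding lexgt_def using l assms(1,2) by (intro bexI[of _ l]) auto
qed

lemma dec_chain:
  fixes c :: "nat \<Rightarrow> nat \<Rightarrow> real" and i j m :: nat
  assumes dc: "\<forall>x. x+1<m \<longrightarrow> lexgt n (c x) (c (x+1))"
  shows "i < j \<Longrightarrow> j < m \<Longrightarrow> lexgt n (c i) (c j)"
proof (induction j)
  case 0 then show ?case by simp
next
  case (Suc j)
  have step: "lexgt n (c j) (c (Suc j))" using dc Suc.prems by auto
  show ?case
  proof (cases "i = j")
    case True then show ?thesis using step by simp
  next
    case False
    then have "lexgt n (c i) (c j)" using Suc by auto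
    then show ?thesis using step lexgt_trans by blast
  qed
qed

lemma mono_map:
  fixes c d :: "nat \<Rightarrow> nat \<Rightarrow> real"
  assumes dc: "\<forall>x. x+1<m \<longrightarrow> lexgt n (c x) (c (x+1))"
    and dd: "\<forall>x. x+1<m' \<longrightarrow> lexgt n (d x) (d (x+1))"
    and A: "\<forall>x<m. \<exists>y<m'. \<forall>k\<in>{1..n}. c x k = d y k"
  shows "\<exists>\<phi>. (\<forall>x<m. \<phi> x < m' \<and> (\<forall>k\<in>{1..n}. c x k = d (\<phi> x) k)) \<and> (\<forall>i j. i < j \<and> j < m \<longrightarrow> \<phi> i < \<phi> j)"
proof -
  from A have "\<forall>x. \<exists>y. x < m \<longrightarrow> y < m' \<and> (\<forall>k\<in>{1..n}. c x k = d y k)" by blast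
  then obtain \<phi> where \<phi>: "\<And>x. x < m \<Longrightarrow> \<phi> x < m' \<and> (\<forall>k\<in>{1..n}. c x k = d (\<phi> x) k)" by metis
  have "\<phi> i < \<phi> j" if ij: "i < j" "j < m" for i j
  proof (rule ccontr)
    assume "\<not> \<phi> i < \<phi> j"
    have g: "lexgt n (d (\<phi> i)) (d (\<phi> j))"
      using lexgt_cong[OF _ _ dec_chain[OF dc ij]] \<phi>[of i] \<phi>[of j] ij by auto
    show False
    proof (cases "\<phi> i = \<phi> j")
      case True then show False using g lexgt_irrefl by metis
    next
      case False
      then have "\<phi> j < \<phi> i" using \<open>\<not> \<phi> i < \<phi> j\<close> by simp
      then have "lexgt n (d (\<phi> j)) (d (\<phi> i))" using dec_chain[OF dd] \<phi>[of i] ij by auto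
      then show False using g lexgt_trans lexgt_irrefl by metis
    qed
  qed
  then show ?thesis using \<phi> by blast
qed

lemma smono_bound:
  fixes \<phi> :: "nat \<Rightarrow> nat"
  assumes sm: "\<forall>i j. i < j \<and> j < m \<longrightarrow> \<phi> i < \<phi> j"
  shows "x + j < m \<Longrightarrow> \<phi> x + j \<le> \<phi> (x + j)"
proof (induction j)
  case 0 then show ?case by simp
next
  case (Suc j)
  then have "\<phi> x + j \<le> \<phi> (x + j)" by simp
  moreover have "\<phi> (x + j) < \<phi> (x + Suc j)" using sm Suc.prems by auto
  ultimately show ?case by simp
qed

lemma order_eq:
  fixes c d :: "nat \<Rightarrow> nat \<Rightarrow> real"
  assumes dc: "\<forall>x. x+1<m \<longrightarrow> lexgt n (c x) (c (x+1))"
    and dd: "\<forall>x. x+1<m' \<longrightarrow> lexgt n (d x) (d (x+1))"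
    and A: "\<forall>x<m. \<exists>y<m'. \<forall>k\<in>{1..n}. c x k = d y k"
    and B: "\<forall>y<m'. \<exists>x<m. \<forall>k\<in>{1..n}. d y k = c x k"
  shows "m = m' \<and> (\<forall>x<m. \<forall>k\<in>{1..n}. c x k = d x k)"
proof -
  obtain \<phi> where \<phi>: "\<forall>x<m. \<phi> x < m' \<and> (\<forall>k\<in>{1..n}. c x k = d (\<phi> x) k)"
    and sm: "\<forall>i j. i < j \<and> j < m \<longrightarrow> \<phi> i < \<phi> j"
    using mono_map[OF dc dd A] by blast
  obtain \<psi> where \<psi>: "\<forall>x<m'. \<psi> x < m \<and> (\<forall>k\<in>{1..n}. d x k = c (\<psi> x) k)"
    and sm2: "\<forall>i j. i < j \<and> j < m' \<longrightarrow> \<psi> i < \<psi> j"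
    using mono_map[OF dd dc B] by blast
  have le1: "m \<le> m'"
  proof (cases "m = 0")
    case False
    have "\<phi> 0 + (m - 1) \<le> \<phi> (0 + (m - 1))" using smono_bound[OF sm, of 0 "m-1"] False by simp
    moreover have "\<phi> (m - 1) < m'" using \<phi> False by simp
    ultimately show ?thesis by simp
  qed simp
  have le2: "m' \<le> m"
  proof (cases "m' = 0")
    case False
    have "\<psi> 0 + (m' - 1) \<le> \<psi> (0 + (m' - 1))" using smono_bound[OF sm2, of 0 "m'-1"] False by simp
    moreover have "\<psi> (m' - 1) < m" using \<psi> False by simp
    ultimately show ?thesis by simp
  qed simp
  have eq: "m = m'" using le1 le2 by simp
  have "\<phi> x = x" if x: "x < m" for x
  proof -
    have "\<phi> 0 + x \<le> \<phi> (0 + x)" using smono_bound[OF sm, of 0 x] x by simp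
    moreover have "\<phi> x + (m - 1 - x) \<le> \<phi> (x + (m - 1 - x))" using smono_bound[OF sm, of x "m-1-x"] x by simp
    moreover have "\<phi> (m - 1) < m'" using \<phi> x by simp
    moreover have "x + (m - 1 - x) = m - 1" using x by simp
    ultimately show ?thesis using eq by simp
  qed
  then show ?thesis using eq \<phi> by auto
qed


theorem theorem6:
  fixes n m m' :: nat and N M :: "nat \<Rightarrow> nat \<Rightarrow> real"
  assumes "standard_form n m N" and "standard_form n m' M"
  shows "channel_equiv n m N m' M \<longleftrightarrow> (m = m' \<and> (\<forall>y<n. \<forall>x<m. N y x = M y x))"
proof
  assume ce: "channel_equiv n m N m' M"
  have cm1: "channel_majorizes n m N m' M" and cm2: "channel_majorizes n m' M m N"
    using ce unfolding channel_equiv_def by auto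
  have H1: "\<forall>y<m'. \<exists>t. (\<forall>x<m. 0 \<le> t x) \<and> sum t {..<m} = 1 \<and> (\<forall>k\<in>{1..n}. cum M y k \<le> (\<Sum>x<m. t x * cum N x k))"
    using cm_dom[OF assms(1) cm1] by blast
  have H2: "\<forall>x<m. \<exists>s. (\<forall>y<m'. 0 \<le> s y) \<and> sum s {..<m'} = 1 \<and> (\<forall>k\<in>{1..n}. cum N x k \<le> (\<Sum>y<m'. s y * cum M y k))"
    using cm_dom[OF assms(2) cm2] by blast
  have Hc: "\<forall>x<m. \<not>(\<exists>t. (\<forall>x'<m. 0 \<le> t x') \<and> t x = 0 \<and> sum t {..<m} = 1 \<and> (\<forall>k\<in>{1..n}. cum N x k \<le> (\<Sum>x'<m. t x' * cum N x' k)))"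
    using sf_nodom[OF assms(1)] by blast
  have Hd: "\<forall>x<m'. \<not>(\<exists>t. (\<forall>x'<m'. 0 \<le> t x') \<and> t x = 0 \<and> sum t {..<m'} = 1 \<and> (\<forall>k\<in>{1..n}. cum M x k \<le> (\<Sum>x'<m'. t x' * cum M x' k)))"
    using sf_nodom[OF assms(2)] by blast
  have A: "\<forall>x<m. \<exists>y<m'. \<forall>k\<in>{1..n}. cum N x k = cum M y k"
    using found[OF H1 H2 Hc] by blast
  have B: "\<forall>y<m'. \<exists>x<m. \<forall>k\<in>{1..n}. cum M y k = cum N x k"
    using found[OF H2 H1 Hd] by blast
  have dc: "\<forall>x. x+1<m \<longrightarrow> lexgt n (cum N x) (cum N (x+1))" using sf_lex[OF assms(1)] by blast
  have dd: "\<forall>x. x+1<m' \<longrightarrow> lexgt n (cum M x) (cum M (x+1))" using sf_lex[OF assms(2)] by blast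
  have oe: "m = m' \<and> (\<forall>x<m. \<forall>k\<in>{1..n}. cum N x k = cum M x k)"
    using order_eq[OF dc dd A B] .
  have ce0: "cum N x k = cum M x k" if "x < m" "k \<le> n" for x k
  proof (cases "k = 0")
    case True then show ?thesis by (simp add: cum_def)
  next
    case False then show ?thesis using oe that by auto
  qed
  have "N y x = M y x" if "y < n" "x < m" for y x
  proof -
    have "N y x = cum N x (Suc y) - cum N x y" by (simp add: cum_def)
    also have "\<dots> = cum M x (Suc y) - cum M x y" using ce0 that by simp
    also have "\<dots> = M y x" by (simp add: cum_def)
    finally show ?thesis .
  qed
  then show "m = m' \<and> (\<forall>y<n. \<forall>x<m. N y x = M y x)" using oe by blast
next
  assume eq: "m = m' \<and> (\<forall>y<n. \<forall>x<m. N y x = M y x)"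
  have gen: "channel_majorizes n m A m B" if AB: "\<forall>y<n. \<forall>x<m. A y x = B y x" for A B
  proof -
    have key: "B y x' = (\<Sum>z<1::nat. \<Sum>x<m. \<Sum>y0<n. (if y = y0 then 1 else 0) * A y0 x * (if x = x' then 1 else (0::real)))"
      if y: "y < n" and x': "x' < m" for y x'
    proof -
    have "(\<Sum>z<1::nat. \<Sum>x<m. \<Sum>y0<n. (if y = y0 then 1 else 0) * A y0 x * (if x = x' then 1 else (0::real)))
        = (\<Sum>x<m. \<Sum>y0<n. (if y = y0 then 1 else 0) * A y0 x * (if x = x' then 1 else (0::real)))" by simp
    also have "\<dots> = (\<Sum>x<m. (if x = x' then A y x else 0))"
    proof (intro sum.cong refl)
      fix x assume "x \<in> {..<m}"
      have st: "{y0. y = y0 \<and> y0 < n} = {y}" using y by auto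
      show "(\<Sum>y0<n. (if y = y0 then 1 else 0) * A y0 x * (if x = x' then 1 else (0::real))) = (if x = x' then A y x else 0)"
        by (cases "x = x'") (simp_all add: sum_ind st)
    qed
    also have "\<dots> = A y x'" using x' by simp
    finally show "B y x' = (\<Sum>z<1::nat. \<Sum>x<m. \<Sum>y0<n. (if y = y0 then 1 else 0) * A y0 x * (if x = x' then 1 else (0::real)))"
      using AB y x' by simp
    qed
    show ?thesis unfolding channel_majorizes_def
      by (intro exI[of _ "1::nat"] exI[of _ "\<lambda>x z x'. if x = x' then 1 else 0"]
      exI[of _ "\<lambda>y' y z. if y' = y then 1 else 0"] conjI allI impI) (auto simp: key)
  qed
  have "channel_majorizes n m N m M" using gen eq by blast
  moreover have "channel_majorizes n m M m N" using gen eq by (metis)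
  ultimately show "channel_equiv n m N m' M" unfolding channel_equiv_def using eq by simp
qed

end
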